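(* If $H$ is a generalized hexagonal system, then $\zeta'(H,x)=\sum_{h}\zeta(H-h,x)$, where the sum runs over all hexagons $h$ of $H$ and $\zeta'$ denotes the derivative with respect to $x$.
   Context: A generalized hexagonal system is a subgraph of a hexagonal system (a 2-connected finite plane graph in which every interior face is a regular hexagon of side length one); its hexagons are the 6-cycles of it that bound hexagonal faces of the hexagonal lattice. A Clar cover of $H$ is a spanning subgraph each of whose components is a hexagon of $H$ or a single edge. $z(H,k)$ is the number of Clar covers of $H$ with exactly $k$ hexagon components and $\zeta(H,x)=\sum_{k\ge0}z(H,k)x^k$ (the empty graph has exactly one Clar cover, with $0$ hexagons). $H-h$ denotes the graph obtained from $H$ by deleting the vertices of $h$. *)

theory Defs
  imports "HOL-Computational_Algebra.Formal_Power_Series"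
begin

text \<open>Vertices of the hexagonal lattice are modelled as integer points (i,j) of the
brick-wall drawing: (i,j)--(i+1,j) is always an edge, and (i,j)--(i,j+1) is an edge
iff i+j is even.  This plane graph is (as a plane graph, up to homeomorphism) the
hexagonal lattice; its bounded faces are exactly the hexagons indexed below.\<close>

type_synonym vtx = "int \<times> int"

definition lat_adj :: "vtx \<Rightarrow> vtx \<Rightarrow> bool" where
  "lat_adj u v \<longleftrightarrow>
     (snd u = snd v \<and> \<bar>fst u - fst v\<bar> = 1) \<or>
     (fst u = fst v \<and> \<bar>snd u - snd v\<bar> = 1 \<and> even (fst u + min (snd u) (snd v)))"

definition lat_edges :: "vtx set set" where
  "lat_edges = {{u, v} | u v. lat_adj u v}"

text \<open>Hexagonal faces of the lattice, indexed by their lower-left corner (i,j), i+j even.\<close>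

definition hex_face :: "vtx \<Rightarrow> bool" where
  "hex_face c \<longleftrightarrow> even (fst c + snd c)"

definition hex_verts :: "vtx \<Rightarrow> vtx set" where
  "hex_verts c = (case c of (i, j) \<Rightarrow>
     {(i, j), (i+1, j), (i+2, j), (i, j+1), (i+1, j+1), (i+2, j+1)})"

definition hex_edges :: "vtx \<Rightarrow> vtx set set" where
  "hex_edges c = (case c of (i, j) \<Rightarrow>
     {{(i, j), (i+1, j)}, {(i+1, j), (i+2, j)}, {(i+2, j), (i+2, j+1)},
      {(i+2, j+1), (i+1, j+1)}, {(i+1, j+1), (i, j+1)}, {(i, j+1), (i, j)}})"

text \<open>A generalized
hexagonal system is a (finite) subgraph of a hexagonal system; these are exactly the
finite subgraphs of the hexagonal lattice.\<close>

definition gen_hex_system :: "vtx set \<Rightarrow> vtx set set \<Rightarrow> bool" where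
  "gen_hex_system V E \<longleftrightarrow> finite V \<and> E \<subseteq> lat_edges \<and> (\<forall>e\<in>E. e \<subseteq> V)"

definition hexagons :: "vtx set \<Rightarrow> vtx set set \<Rightarrow> vtx set" where
  "hexagons V E = {c. hex_face c \<and> hex_verts c \<subseteq> V \<and> hex_edges c \<subseteq> E}"

definition del_verts_V :: "vtx set \<Rightarrow> vtx set \<Rightarrow> vtx set" where
  "del_verts_V V X = V - X"

definition del_verts_E :: "vtx set set \<Rightarrow> vtx set \<Rightarrow> vtx set set" where
  "del_verts_E E X = {e \<in> E. e \<inter> X = {}}"

text \<open>A Clar cover (spanning subgraph whose components are hexagons of H or single
edges) is represented by the pair (S, M) of its hexagon components S and its edge
components M.\<close>

definition clar_covers :: "vtx set \<Rightarrow> vtx set set \<Rightarrow> (vtx set \<times> vtx set set) set" where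
  "clar_covers V E = {(S, M).
     S \<subseteq> hexagons V E \<and> M \<subseteq> E \<and>
     (\<forall>c\<in>S. \<forall>d\<in>S. c \<noteq> d \<longrightarrow> hex_verts c \<inter> hex_verts d = {}) \<and>
     (\<forall>e\<in>M. \<forall>e'\<in>M. e \<noteq> e' \<longrightarrow> e \<inter> e' = {}) \<and>
     (\<forall>e\<in>M. \<forall>c\<in>S. e \<inter> hex_verts c = {}) \<and>
     V = (\<Union>c\<in>S. hex_verts c) \<union> \<Union>M}"

definition clar_z :: "vtx set \<Rightarrow> vtx set set \<Rightarrow> nat \<Rightarrow> nat" where
  "clar_z V E k = card {(S, M) \<in> clar_covers V E. card S = k}"

definition zeta :: "vtx set \<Rightarrow> vtx set set \<Rightarrow> int fps" where
  "zeta V E = Abs_fps (\<lambda>k. int (clar_z V E k))"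

end

theory Submission
  imports Defs
begin

lemma c_in_hex_verts: "c \<in> hex_verts c"
  by (cases c) (simp add: hex_verts_def)

lemma hex_verts_inj: "inj hex_verts"
proof (rule injI)
  fix c d assume h: "hex_verts c = hex_verts d"
  obtain i j where c: "c = (i,j)" by fastforce
  obtain a b where d: "d = (a,b)" by fastforce
  have "(i,j) \<in> hex_verts (a,b)" "(a,b) \<in> hex_verts (i,j)"
    using h c_in_hex_verts[of c] c_in_hex_verts[of d] c d by auto
  then show "c = d" using c d by (auto simp: hex_verts_def)
qed

lemma hexagons_sub: "hexagons V E \<subseteq> V"
  using c_in_hex_verts by (auto simp: hexagons_def)

lemma finite_hexagons: "finite V \<Longrightarrow> finite (hexagons V E)"
  using hexagons_sub by (rule finite_subset)

lemma finite_covers: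
  assumes "gen_hex_system V E"
  shows "finite (clar_covers V E)"
proof -
  have fV: "finite V" using assms by (simp add: gen_hex_system_def)
  have "E \<subseteq> Pow V" using assms by (auto simp: gen_hex_system_def)
  then have fE: "finite E" using fV by (meson finite_Pow_iff finite_subset)
  have "clar_covers V E \<subseteq> Pow (hexagons V E) \<times> Pow E"
    by (auto simp: clar_covers_def)
  moreover have "finite (hexagons V E)" using finite_hexagons[OF fV] .
  ultimately show ?thesis using fE by (meson finite_Pow_iff finite_SigmaI finite_subset)
qed

lemma gen_del:
  assumes "gen_hex_system V E"
  shows "gen_hex_system (del_verts_V V X) (del_verts_E E X)"
  using assms by (auto simp: gen_hex_system_def del_verts_V_def del_verts_E_def)

lemma key:
  assumes g: "gen_hex_system V E" and c: "c \<in> hexagons V E"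
  shows "card {x \<in> {(S, M) \<in> clar_covers V E. card S = Suc k}. c \<in> fst x}
       = clar_z (del_verts_V V (hex_verts c)) (del_verts_E E (hex_verts c)) k"
proof -
  let ?V' = "del_verts_V V (hex_verts c)"
  let ?E' = "del_verts_E E (hex_verts c)"
  let ?B = "{(S, M) \<in> clar_covers ?V' ?E'. card S = k}"
  let ?A = "{x \<in> {(S, M) \<in> clar_covers V E. card S = Suc k}. c \<in> fst x}"
  let ?f = "\<lambda>(S, M). (insert c S, M)"
  have fB: "finite ?B" using finite_covers[OF gen_del[OF g]] by (rule finite_subset[rotated]) auto
  have cV: "hex_verts c \<subseteq> V" and cE: "hex_edges c \<subseteq> E" and cf: "hex_face c"
    using c by (auto simp: hexagons_def)
  have notin: "c \<notin> S" if "(S,M) \<in> clar_covers ?V' ?E'" for S M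
  proof
    assume "c \<in> S"
    then have "hex_verts c \<subseteq> ?V'" using that by (auto simp: clar_covers_def hexagons_def)
    then show False using c_in_hex_verts[of c] by (auto simp: del_verts_V_def)
  qed
  have finS: "finite S" if "(S,M) \<in> clar_covers V' E'" "gen_hex_system V' E'" for S M V' E'
    using that finite_hexagons[of V' E'] by (auto simp: clar_covers_def gen_hex_system_def
        intro: finite_subset)
  have "?A = ?f ` ?B"
  proof (rule set_eqI, rule iffI)
    fix x assume xA: "x \<in> ?A"
    obtain S M where x: "x = (S,M)" by fastforce
    have cov: "(S,M) \<in> clar_covers V E" and cS: "c \<in> S" and cardS: "card S = Suc k"
      using xA x by auto
    have finS': "finite S" using finS[OF cov g] .
    have disj: "hex_verts d \<inter> hex_verts c = {}" if "d \<in> S - {c}" for d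
      using cov that cS by (auto simp: clar_covers_def)
    have "(S - {c}, M) \<in> clar_covers ?V' ?E'"
    proof -
      have "S - {c} \<subseteq> hexagons ?V' ?E'"
      proof
        fix d assume d: "d \<in> S - {c}"
        then have dh: "d \<in> hexagons V E" using cov by (auto simp: clar_covers_def)
        have dis: "hex_verts d \<inter> hex_verts c = {}" using disj d .
        have "\<forall>e\<in>hex_edges d. e \<subseteq> hex_verts d"
          by (cases d) (auto simp: hex_edges_def hex_verts_def)
        then show "d \<in> hexagons ?V' ?E'" using dh dis
          by (auto simp: hexagons_def del_verts_V_def del_verts_E_def)
      qed
      moreover have "M \<subseteq> ?E'"
      proof -
        have "M \<subseteq> E" "\<forall>e\<in>M. e \<inter> hex_verts c = {}" using cov cS by (simp_all add: clar_covers_def)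
        then show ?thesis by (auto simp: del_verts_E_def)
      qed
      moreover have "?V' = (\<Union>d\<in>S - {c}. hex_verts d) \<union> \<Union>M"
      proof -
        have VV: "V = (\<Union>d\<in>S. hex_verts d) \<union> \<Union>M" using cov by (simp add: clar_covers_def)
        have m: "\<forall>e\<in>M. e \<inter> hex_verts c = {}" using cov cS by (simp add: clar_covers_def)
        show ?thesis unfolding del_verts_V_def
          apply (subst VV) using disj m cS by blast
      qed
      ultimately show ?thesis using cov by (auto simp: clar_covers_def)
    qed
    moreover have "card (S - {c}) = k" using cardS cS finS' by simp
    moreover have "x = ?f (S - {c}, M)" using x cS by auto
    ultimately show "x \<in> ?f ` ?B" by blast
  next
    fix x assume "x \<in> ?f ` ?B"
    then obtain S M where x: "x = (insert c S, M)" and cov: "(S,M) \<in> clar_covers ?V' ?E'"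
      and cardS: "card S = k" by auto
    have cn: "c \<notin> S" using notin[OF cov] .
    have finS': "finite S" using finS[OF cov gen_del[OF g]] .
    have Sh: "S \<subseteq> hexagons ?V' ?E'" and ME: "M \<subseteq> ?E'"
      and V': "?V' = (\<Union>d\<in>S. hex_verts d) \<union> \<Union>M" using cov by (auto simp: clar_covers_def)
    have dV: "hex_verts d \<inter> hex_verts c = {}" if "d \<in> S" for d
      using Sh that by (auto simp: hexagons_def del_verts_V_def)
    have cov2: "(insert c S, M) \<in> clar_covers V E"
    proof -
      have "insert c S \<subseteq> hexagons V E"
        using c Sh by (auto simp: hexagons_def del_verts_V_def del_verts_E_def)
      moreover have "M \<subseteq> E" using ME by (auto simp: del_verts_E_def)
      moreover have "\<forall>e\<in>M. e \<inter> hex_verts c = {}" using ME by (auto simp: del_verts_E_def)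
      moreover have "V = (\<Union>d\<in>insert c S. hex_verts d) \<union> \<Union>M"
        using V' cV by (auto simp: del_verts_V_def)
      moreover have "\<forall>d\<in>insert c S. \<forall>d'\<in>insert c S. d \<noteq> d' \<longrightarrow> hex_verts d \<inter> hex_verts d' = {}"
      proof -
        have pw: "\<forall>d\<in>S. \<forall>d'\<in>S. d \<noteq> d' \<longrightarrow> hex_verts d \<inter> hex_verts d' = {}"
          using cov by (simp add: clar_covers_def)
        show ?thesis
        proof (intro ballI impI)
          fix d d' assume d: "d \<in> insert c S" and d': "d' \<in> insert c S" and ne: "d \<noteq> d'"
          show "hex_verts d \<inter> hex_verts d' = {}"
          proof (cases "d = c")
            case True
            then have "d' \<in> S" using d' ne by auto
            then have "hex_verts d' \<inter> hex_verts c = {}" by (rule dV)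
            then show ?thesis unfolding True by blast
          next
            case False
            then have dS: "d \<in> S" using d by auto
            show ?thesis
            proof (cases "d' = c")
              case True
              from dS have "hex_verts d \<inter> hex_verts c = {}" by (rule dV)
              with True show ?thesis by (rule ssubst[where P="\<lambda>x. hex_verts d \<inter> hex_verts x = {}"])
            next
              case False then have "d' \<in> S" using d' by auto
              then show ?thesis using pw dS ne by meson
            qed
          qed
        qed
      qed
      moreover have "\<forall>e\<in>M. \<forall>e'\<in>M. e \<noteq> e' \<longrightarrow> e \<inter> e' = {}" "\<forall>e\<in>M. \<forall>d\<in>S. e \<inter> hex_verts d = {}"
        using cov by (simp_all add: clar_covers_def)
      moreover have "\<forall>e\<in>M. \<forall>d\<in>insert c S. e \<inter> hex_verts d = {}"
        using calculation(3) calculation(7) by simp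
      ultimately show ?thesis by (simp only: clar_covers_def mem_Collect_eq case_prod_conv simp_thms)
    qed
    have cd2: "card (insert c S) = Suc k" using cn finS' cardS by simp
    show "x \<in> ?A" unfolding x using cov2 cd2
      by (simp only: mem_Collect_eq case_prod_conv fst_conv insert_iff simp_thms)
  qed
  moreover have "inj_on ?f ?B"
  proof (rule inj_onI)
    fix x y assume xB: "x \<in> ?B" and yB: "y \<in> ?B" and fe: "?f x = ?f y"
    obtain S M where x: "x = (S, M)" by fastforce
    obtain S' M' where y: "y = (S', M')" by fastforce
    have c1: "c \<notin> S" using xB x by (intro notin[of S M]) simp
    have c2: "c \<notin> S'" using yB y by (intro notin[of S' M']) simp
    have "insert c S = insert c S'" "M = M'" using fe x y by simp_all
    then have "S = S'" "M = M'" using insert_ident[OF c1 c2] by simp_all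
    then show "x = y" using x y by simp
  qed
  ultimately have "card ?A = card ?B" by (simp add: card_image)
  then show ?thesis by (simp add: clar_z_def)
qed

theorem theorem4:
  assumes "gen_hex_system V E"
  shows "fps_deriv (zeta V E) =
         (\<Sum>c\<in>hexagons V E. zeta (del_verts_V V (hex_verts c)) (del_verts_E E (hex_verts c)))"
proof (rule fps_ext)
  fix k
  let ?A = "{(S, M) \<in> clar_covers V E. card S = Suc k}"
  have fV: "finite V" using assms by (simp add: gen_hex_system_def)
  have fA: "finite ?A" using finite_covers[OF assms] by (rule finite_subset[rotated]) auto
  have cnt: "\<forall>x\<in>?A. card {c \<in> hexagons V E. c \<in> fst x} = Suc k"
  proof
    fix x assume "x \<in> ?A"
    then have "fst x \<subseteq> hexagons V E" "card (fst x) = Suc k"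
      by (auto simp: clar_covers_def)
    then have "{c \<in> hexagons V E. c \<in> fst x} = fst x" by auto
    then show "card {c \<in> hexagons V E. c \<in> fst x} = Suc k" using \<open>card (fst x) = Suc k\<close> by simp
  qed
  have "(\<Sum>c\<in>hexagons V E. card {x\<in>?A. c \<in> fst x}) = Suc k * card ?A"
    by (rule sum_multicount[OF finite_hexagons[OF fV] fA cnt])
  moreover have "(\<Sum>c\<in>hexagons V E. card {x\<in>?A. c \<in> fst x}) =
     (\<Sum>c\<in>hexagons V E. clar_z (del_verts_V V (hex_verts c)) (del_verts_E E (hex_verts c)) k)"
    using key[OF assms] by (intro sum.cong) auto
  ultimately have eq: "Suc k * clar_z V E (Suc k) =
     (\<Sum>c\<in>hexagons V E. clar_z (del_verts_V V (hex_verts c)) (del_verts_E E (hex_verts c)) k)"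
    by (simp add: clar_z_def)
  show "fps_nth (fps_deriv (zeta V E)) k =
     fps_nth (\<Sum>c\<in>hexagons V E. zeta (del_verts_V V (hex_verts c)) (del_verts_E E (hex_verts c))) k"
  proof -
    have i1: "int (Suc k * clar_z V E (Suc k)) = int (\<Sum>c\<in>hexagons V E. clar_z (del_verts_V V (hex_verts c)) (del_verts_E E (hex_verts c)) k)"
      using eq by (rule arg_cong)
    have L: "fps_nth (fps_deriv (zeta V E)) k = int (Suc k * clar_z V E (Suc k))"
      unfolding fps_deriv_nth zeta_def fps_nth_Abs_fps of_nat_mult Suc_eq_plus1 ..
    have R: "fps_nth (\<Sum>c\<in>hexagons V E. zeta (del_verts_V V (hex_verts c)) (del_verts_E E (hex_verts c))) k
       = int (\<Sum>c\<in>hexagons V E. clar_z (del_verts_V V (hex_verts c)) (del_verts_E E (hex_verts c)) k)"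
      unfolding fps_sum_nth zeta_def fps_nth_Abs_fps of_nat_sum ..
    show ?thesis unfolding L R i1 ..
  qed
qed

end
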